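(* Let $\odot$ be a pseudo-multiplication and let $\nu,\tau$ be $\sigma$-maxitive measures on a $\sigma$-algebra $\mathcal{B}$ on a nonempty set $E$. Assume that $\nu$ is semi-$\odot$-finite and that $\nu$ admits a density $c$ with respect to $\tau$. Then $\nu$ admits a density with respect to $\tau$ taking only $\odot$-finite values.
   Context: Write $\overline{\mathbb{R}}_+=[0,\infty]$ and $\oplus$ for the supremum. A pseudo-multiplication is a binary operation $\odot$ on $\overline{\mathbb{R}}_+$ with the following properties: - it is associative; - it is continuous on $(0,\infty)\times[0,\infty]$; - for every $t$, the map $s\mapsto s\odot t$ is continuous on $(0,\infty]$; - it is nondecreasing in each argument; - it has a left identity $1_\odot$, i.e. $1_\odot\odot t=t$ for all $t$; - it has no zero divisors, i.e. $s\odot t=0$ implies $s=0$ or $t=0$; - $0\odot t=t\odot 0=0$ for all $t$. Put $O(t)=\inf_{s>0}s\odot t$. An element $t$ is $\odot$-finite if $O(t)=0$, and $\odot$-infinite otherwise. A $\sigma$-maxitive measure on $\mathcal{B}$ is a map $\nu:\mathcal{B}\to\overline{\mathbb{R}}_+$ with $\nu(\emptyset)=0$ and $\nu(\bigcup_{j\in J}B_j)=\sup_{j\in J}\nu(B_j)$ for every countable family $(B_j)$ in $\mathcal{B}$. A map $f:E\to\overline{\mathbb{R}}_+$ is $\mathcal{B}$-measurable if $\{f>t\}\in\mathcal{B}$ for all $t\in[0,\infty)$. The idempotent $\odot$-integral is $\int^\infty_B f\odot d\tau=\sup_{t\in[0,\infty)}t\odot\tau(B\cap\{f>t\})$. $\nu$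 has a density with respect to $\tau$ if there is a $\mathcal{B}$-measurable $c:E\to\overline{\mathbb{R}}_+$ with $\nu(B)=\int^\infty_B c\odot d\tau$ for all $B\in\mathcal{B}$. $\nu$ is semi-$\odot$-finite if, for all $B\in\mathcal{B}$, $\nu(B)=\sup\{\nu(A):A\in\mathcal{B},\,A\subset B,\,\nu(A)\text{ is }\odot\text{-finite}\}$. *)

theory Defs
  imports "HOL-Analysis.Analysis"
begin

definition pseudo_mult :: "(ennreal \<Rightarrow> ennreal \<Rightarrow> ennreal) \<Rightarrow> bool" where
  "pseudo_mult m \<longleftrightarrow>
     (\<forall>r s t. m (m r s) t = m r (m s t)) \<and>
     continuous_on ({0<..<top} \<times> UNIV) (\<lambda>(s, t). m s t) \<and>
     (\<forall>t. continuous_on {0<..} (\<lambda>s. m s t)) \<and>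
     (\<forall>s s' t. s \<le> s' \<longrightarrow> m s t \<le> m s' t) \<and>
     (\<forall>s t t'. t \<le> t' \<longrightarrow> m s t \<le> m s t') \<and>
     (\<exists>e. \<forall>t. m e t = t) \<and>
     (\<forall>s t. m s t = 0 \<longrightarrow> s = 0 \<or> t = 0) \<and>
     (\<forall>t. m 0 t = 0 \<and> m t 0 = 0)"

definition O_of :: "(ennreal \<Rightarrow> ennreal \<Rightarrow> ennreal) \<Rightarrow> ennreal \<Rightarrow> ennreal" where
  "O_of m t = (INF s\<in>{0<..}. m s t)"

definition odot_finite :: "(ennreal \<Rightarrow> ennreal \<Rightarrow> ennreal) \<Rightarrow> ennreal \<Rightarrow> bool" where
  "odot_finite m t \<longleftrightarrow> O_of m t = 0"

definition sigma_maxitive :: "'a set set \<Rightarrow> ('a set \<Rightarrow> ennreal) \<Rightarrow> bool" where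
  "sigma_maxitive B \<nu> \<longleftrightarrow> \<nu> {} = 0 \<and>
     (\<forall>F. countable F \<longrightarrow> F \<subseteq> B \<longrightarrow> \<nu> (\<Union>F) = (SUP A\<in>F. \<nu> A))"

definition B_measurable :: "'a set \<Rightarrow> 'a set set \<Rightarrow> ('a \<Rightarrow> ennreal) \<Rightarrow> bool" where
  "B_measurable E B f \<longleftrightarrow> (\<forall>t::real. t \<ge> 0 \<longrightarrow> {x\<in>E. f x > ennreal t} \<in> B)"

definition idem_integral ::
  "(ennreal \<Rightarrow> ennreal \<Rightarrow> ennreal) \<Rightarrow> 'a set \<Rightarrow> ('a set \<Rightarrow> ennreal) \<Rightarrow> ('a \<Rightarrow> ennreal) \<Rightarrow> 'a set \<Rightarrow> ennreal" where
  "idem_integral m E \<tau> f A = (SUP t\<in>{t::real. t \<ge> 0}. m (ennreal t) (\<tau> (A \<inter> {x\<in>E. f x > ennreal t})))"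

definition has_density ::
  "(ennreal \<Rightarrow> ennreal \<Rightarrow> ennreal) \<Rightarrow> 'a set \<Rightarrow> 'a set set \<Rightarrow> ('a set \<Rightarrow> ennreal) \<Rightarrow> ('a set \<Rightarrow> ennreal) \<Rightarrow> ('a \<Rightarrow> ennreal) \<Rightarrow> bool" where
  "has_density m E B \<nu> \<tau> c \<longleftrightarrow> B_measurable E B c \<and> (\<forall>A\<in>B. \<nu> A = idem_integral m E \<tau> c A)"

definition semi_odot_finite ::
  "(ennreal \<Rightarrow> ennreal \<Rightarrow> ennreal) \<Rightarrow> 'a set set \<Rightarrow> ('a set \<Rightarrow> ennreal) \<Rightarrow> bool" where
  "semi_odot_finite m B \<nu> \<longleftrightarrow>
     (\<forall>A\<in>B. \<nu> A = (SUP A'\<in>{A'\<in>B. A' \<subseteq> A \<and> odot_finite m (\<nu> A')}. \<nu> A'))"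

end

theory Submission
  imports Defs
begin


lemma pm_facts:
  assumes "pseudo_mult m"
  shows pm_assoc: "m (m r s) t = m r (m s t)"
    and pm_mono1: "s \<le> s' \<Longrightarrow> m s t \<le> m s' t"
    and pm_mono2: "t \<le> t' \<Longrightarrow> m s t \<le> m s t'"
    and pm_nozd: "m s t = 0 \<Longrightarrow> s = 0 \<or> t = 0"
    and pm_zero1: "m 0 t = 0" and pm_zero2: "m t 0 = 0"
    and pm_jc: "continuous_on ({0<..<top} \<times> UNIV) (\<lambda>(s, t). m s t)"
  using assms unfolding pseudo_mult_def by simp_all

lemma pm_cont2:
  assumes "pseudo_mult m" "0 < s" "s < top"
  shows "continuous_on UNIV (m s)"
proof -
  have "continuous_on UNIV (\<lambda>t. (\<lambda>(s, t). m s t) (s, t))"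
    by (rule continuous_on_compose2[OF pm_jc[OF assms(1)]]) (auto intro!: continuous_intros simp: assms)
  then show ?thesis by simp
qed

lemma O_mono: "t \<le> t' \<Longrightarrow> pseudo_mult m \<Longrightarrow> O_of m t \<le> O_of m t'"
  unfolding O_of_def by (rule INF_mono) (auto intro: pm_mono2)

lemma O_zero: "pseudo_mult m \<Longrightarrow> O_of m 0 = 0"
proof -
  assume pm: "pseudo_mult m"
  have ne: "({0<..} :: ennreal set) \<noteq> {}" using zero_less_one greaterThan_iff by blast
  show ?thesis unfolding O_of_def using pm_zero2[OF pm] INF_const[OF ne, of 0] by simp
qed

lemma keyL:
  assumes pm: "pseudo_mult m" and t0: "O_of m t0 > 0" and u: "u > 0"
    and v: "\<And>r. 0 \<le> r \<Longrightarrow> ennreal r < t0 \<Longrightarrow> m (ennreal r) u \<le> v"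
  shows "O_of m v > 0"
proof -
  obtain b where b: "0<b" "b<O_of m t0" using dense t0 by blast
  have t0pos: "0 < t0"
    using t0 O_zero[OF pm] by (metis not_gr_zero)
  have "m b u \<le> m s v" if s: "0 < s" for s
  proof -
    define s1 where "s1 = min s 1"
    have s1: "0 < s1" "s1 \<le> s" using s unfolding s1_def by (auto simp: min_def)
    have "s1 \<le> 1" unfolding s1_def by simp
    then have s1t: "s1 < top" using ennreal_one_less_top by (rule order.strict_trans1)
    have cont: "continuous_on UNIV (m s1)" using pm_cont2[OF pm s1(1) s1t] .
    have "O_of m t0 \<le> m s1 t0" unfolding O_of_def by (rule INF_lower) (simp add: s1)
    with b have bt0: "t0 \<in> m s1 -` {b<..}" by auto
    have op: "open (m s1 -` {b<..})" by (rule open_vimage[OF _ cont]) simp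
    obtain a where a: "a < t0" "{a<..t0} \<subseteq> m s1 -` {b<..}"
      using open_left[OF op bt0 t0pos] by blast
    obtain t where t: "a < t" "t < t0" using dense a(1) by blast
    then have "t \<in> {a<..t0}" by auto
    with a(2) have bt: "b < m s1 t" by blast
    have "t \<noteq> top" using t by auto
    then obtain r where r: "t = ennreal r" "0 \<le> r" by (cases t) auto
    have "m b u \<le> m (m s1 t) u" using bt by (intro pm_mono1[OF pm]) simp
    also have "\<dots> = m s1 (m t u)" by (rule pm_assoc[OF pm])
    also have "\<dots> \<le> m s1 v" using v[OF r(2)] t r by (intro pm_mono2[OF pm]) simp
    also have "\<dots> \<le> m s v" using s1 by (intro pm_mono1[OF pm])
    finally show ?thesis .
  qed
  then have le: "m b u \<le> O_of m v" unfolding O_of_def by (intro INF_greatest) auto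
  have "m b u \<noteq> 0" using pm_nozd[OF pm, of b u] b u by auto
  then have pos: "0 < m b u" by (simp add: zero_less_iff_neq_zero)
  show ?thesis by (rule order.strict_trans2[OF pos le])
qed



lemma max_mono:
  assumes "sigma_maxitive B \<mu>" "X \<in> B" "Y \<in> B"
  shows "\<mu> (X \<union> Y) = sup (\<mu> X) (\<mu> Y)"
proof -
  have h: "\<forall>F. countable F \<longrightarrow> F \<subseteq> B \<longrightarrow> \<mu> (\<Union>F) = (SUP A\<in>F. \<mu> A)"
    using assms(1) unfolding sigma_maxitive_def by blast
  have "\<mu> (\<Union>{X, Y}) = (SUP A\<in>{X,Y}. \<mu> A)"
    by (rule h[rule_format]) (use assms(2,3) in auto)
  then show ?thesis by simp
qed

lemma max_mono2:
  assumes "sigma_maxitive B \<mu>" "X \<in> B" "Y \<in> B" "X \<subseteq> Y"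
  shows "\<mu> X \<le> \<mu> Y"
  using max_mono[OF assms(1-3)] assms(4) by (metis Un_absorb1 sup.cobounded1)

lemma upclosed_form:
  fixes I :: "ennreal set"
  assumes "\<And>t t'. t \<in> I \<Longrightarrow> t \<le> t' \<Longrightarrow> t' \<in> I"
  shows "I = {Inf I..} \<or> I = {Inf I<..}"
proof (cases "Inf I \<in> I")
  case True
  then have "I = {Inf I..}" using assms by (auto intro: Inf_lower)
  then show ?thesis by blast
next
  case False
  have "I = {Inf I<..}"
  proof
    show "I \<subseteq> {Inf I<..}"
    proof
      fix x assume x: "x \<in> I"
      then have "Inf I \<le> x" by (rule Inf_lower)
      moreover have "Inf I \<noteq> x" using x False by auto
      ultimately show "x \<in> {Inf I<..}" by auto
    qed
    show "{Inf I<..} \<subseteq> I"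
    proof
      fix x assume "x \<in> {Inf I<..}"
      then obtain y where "y \<in> I" "y < x" by (auto simp: Inf_less_iff)
      then show "x \<in> I" using assms by auto
    qed
  qed
  then show ?thesis by blast
qed

theorem mainTheorem4:
  fixes m :: "ennreal \<Rightarrow> ennreal \<Rightarrow> ennreal"
    and E :: "'a set" and B :: "'a set set"
    and \<nu> \<tau> :: "'a set \<Rightarrow> ennreal" and c :: "'a \<Rightarrow> ennreal"
  assumes "pseudo_mult m"
    and "sigma_algebra E B" and "E \<noteq> {}"
    and "sigma_maxitive B \<nu>" and "sigma_maxitive B \<tau>"
    and "semi_odot_finite m B \<nu>"
    and "has_density m E B \<nu> \<tau> c"
  shows "\<exists>c'. has_density m E B \<nu> \<tau> c' \<and> (\<forall>x\<in>E. odot_finite m (c' x))"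
  proof -
  note pm = assms(1)
  interpret S: sigma_algebra E B by (rule assms(2))
  have nu: "sigma_maxitive B \<nu>" and tau: "sigma_maxitive B \<tau>" using assms by auto
  have cm: "B_measurable E B c" and dens: "\<And>A. A \<in> B \<Longrightarrow> \<nu> A = idem_integral m E \<tau> c A"
    using assms(7) unfolding has_density_def by auto
  have semi: "\<And>A. A \<in> B \<Longrightarrow> \<nu> A = (SUP A'\<in>{A'\<in>B. A' \<subseteq> A \<and> odot_finite m (\<nu> A')}. \<nu> A')"
    using assms(6) unfolding semi_odot_finite_def by auto
  define I where "I = {t. O_of m t > 0}"
  have Iup: "\<And>t t'. t \<in> I \<Longrightarrow> t \<le> t' \<Longrightarrow> t' \<in> I"
    unfolding I_def using O_mono[OF _ pm] by (metis mem_Collect_eq order_less_le_trans)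
  have finI: "\<And>t. odot_finite m t \<longleftrightarrow> t \<notin> I"
    unfolding odot_finite_def I_def by (simp add: not_gr_zero)
  define \<theta> where "\<theta> = Inf I"
  have Iform: "I = {\<theta>..} \<or> I = {\<theta><..}" unfolding \<theta>_def by (rule upclosed_form[OF Iup])
  define F where "F = {x\<in>E. c x \<in> I}"
  have FE: "F \<subseteq> E" unfolding F_def by auto
  have FB: "F \<in> B"
  proof -
    define M where "M = measure_of E B (\<lambda>_. 0::ennreal)"
    have sM: "sets M = B" and spM: "space M = E"
      unfolding M_def using S.space_closed by (auto simp: sets_measure_of space_measure_of_conv)
    have "c \<in> borel_measurable M"
    proof (rule borel_measurableI_greater)
      fix y :: ennreal
      show "{x \<in> space M. y < c x} \<in> sets M"
      proof (cases y rule: ennreal_cases)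
        case (real r)
        then show ?thesis using cm unfolding B_measurable_def sM spM by auto
      next
        case top
        then show ?thesis by simp
      qed
    qed
    moreover have "I \<in> sets borel" using Iform by (auto intro: borel_closed borel_open)
    ultimately have "c -` I \<inter> space M \<in> sets M" by (rule measurable_sets)
    moreover have "c -` I \<inter> space M = F" unfolding F_def spM by auto
    ultimately show ?thesis using sM by simp
  qed
  define c' where "c' x = (if c x \<in> I then 0 else c x)" for x
  have fin: "\<forall>x\<in>E. odot_finite m (c' x)"
    unfolding c'_def using finI O_zero[OF pm] by (auto simp: odot_finite_def)
  have c'm: "B_measurable E B c'"
    unfolding B_measurable_def
  proof (intro allI impI)
    fix t :: real assume "0 \<le> t"
    have "{x\<in>E. ennreal t < c' x} = {x\<in>E. ennreal t < c x} - F"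
      unfolding c'_def F_def by auto
    then show "{x\<in>E. ennreal t < c' x} \<in> B" using cm FB \<open>0 \<le> t\<close> unfolding B_measurable_def by auto
  qed
  have int_eq: "idem_integral m E \<tau> c' A = idem_integral m E \<tau> c (A - F)" for A
    unfolding idem_integral_def
  proof (rule SUP_cong)
    fix t assume "t \<in> {t::real. 0 \<le> t}"
    then have "A \<inter> {x\<in>E. ennreal t < c' x} = (A - F) \<inter> {x\<in>E. ennreal t < c x}"
      unfolding c'_def F_def by auto
    then show "m (ennreal t) (\<tau> (A \<inter> {x\<in>E. ennreal t < c' x})) = m (ennreal t) (\<tau> ((A - F) \<inter> {x\<in>E. ennreal t < c x}))"
      by simp
  qed simp
  have claim: "\<nu> D = 0" if D: "D \<in> B" "D \<subseteq> F" "\<nu> D \<notin> I" for D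
  proof (rule ccontr)
    assume nz: "\<nu> D \<noteq> 0"
    have Dt: "{x\<in>E. ennreal t < c x} \<in> B" if "0 \<le> t" for t using cm that unfolding B_measurable_def by auto
    have tD: "\<tau> D > 0"
    proof (rule ccontr)
      assume "\<not> \<tau> D > 0"
      then have z: "\<tau> D = 0" by (simp add: not_gr_zero)
      have "m (ennreal t) (\<tau> (D \<inter> {x\<in>E. ennreal t < c x})) = 0" if "0 \<le> t" for t
      proof -
        have "\<tau> (D \<inter> {x\<in>E. ennreal t < c x}) \<le> \<tau> D"
          using max_mono2[OF tau _ D(1)] Dt[OF that] D(1) by blast
        then show ?thesis using z pm_zero2[OF pm] by simp
      qed
      then have "idem_integral m E \<tau> c D \<le> 0" unfolding idem_integral_def by (intro SUP_least) auto
      then have "\<nu> D = 0" using dens[OF D(1)] by simp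
      with nz show False by simp
    qed
    obtain C t0 where C: "C \<in> B" "C \<subseteq> D" "t0 \<in> I" "\<tau> C > 0" "\<forall>x\<in>C. t0 \<le> c x"
    proof (cases "\<theta> \<in> I")
      case True
      have "\<forall>x\<in>D. \<theta> \<le> c x" using D(2) unfolding F_def \<theta>_def by (auto intro: Inf_lower)
      then show ?thesis using that[of D \<theta>] D True tD by auto
    next
      case False
      then have I2: "I = {\<theta><..}" using Iform by auto
      have "\<theta> \<noteq> top"
      proof
        assume "\<theta> = top"
        then have "F = {}" using I2 unfolding F_def by auto
        then have "D = {}" using D by auto
        then show False using tD tau unfolding sigma_maxitive_def by simp
      qed
      then obtain r where r: "\<theta> = ennreal r" "0 \<le> r" by (cases \<theta>) auto
      define Dn where "Dn n = D \<inter> {x\<in>E. ennreal (r + 1 / Suc n) < c x}" for n :: nat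
      have DnB: "Dn n \<in> B" for n unfolding Dn_def using D(1) Dt[of "r + 1 / Suc n"] r(2) by auto
      have "D \<subseteq> (\<Union>n. Dn n)"
      proof
        fix x assume x: "x \<in> D"
        then have xE: "x \<in> E" and cx: "ennreal r < c x" using D(2) I2 r unfolding F_def by auto
        show "x \<in> (\<Union>n. Dn n)"
        proof (cases "c x" rule: ennreal_cases)
          case (real y)
          then have "r < y" using cx r(2) by (simp add: ennreal_less_iff)
          then obtain n where "inverse (real (Suc n)) < y - r" using reals_Archimedean[of "y - r"] by auto
          then have "1 / real (Suc n) < y - r" by (simp add: inverse_eq_divide)
          then have "r + 1 / Suc n < y" by linarith
          then have "ennreal (r + 1 / Suc n) < ennreal y"
            by (rule ennreal_lessI[rotated]) (use \<open>r < y\<close> r(2) in linarith)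
          then have "ennreal (r + 1 / Suc n) < c x" using real by simp
          then show ?thesis using x xE unfolding Dn_def by auto
        next
          case top
          then show ?thesis using x xE unfolding Dn_def by auto
        qed
      qed
      then have Deq: "D = \<Union>(range Dn)" unfolding Dn_def by auto
      have "\<tau> D = (SUP A\<in>range Dn. \<tau> A)"
        unfolding Deq using tau DnB unfolding sigma_maxitive_def
        by (intro conjunct2[OF tau[unfolded sigma_maxitive_def], rule_format]) auto
      with tD obtain n where n: "0 < \<tau> (Dn n)" by (auto simp: less_SUP_iff)
      have "0 < r + 1 / Suc n" using r(2) by (intro add_nonneg_pos) auto
      then have "ennreal r < ennreal (r + 1 / Suc n)" by (rule ennreal_lessI) simp
      then have t0I: "ennreal (r + 1 / Suc n) \<in> I"
        using I2 r by simp
      show ?thesis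
        by (rule that[of "Dn n" "ennreal (r + 1 / Suc n)"]) (use DnB n t0I in \<open>auto simp: Dn_def\<close>)
    qed
    have "O_of m (\<nu> D) > 0"
    proof (rule keyL[OF pm _ C(4)])
      show "0 < O_of m t0" using C(3) unfolding I_def by simp
      fix r :: real assume r: "0 \<le> r" "ennreal r < t0"
      have sub: "C \<subseteq> D \<inter> {x\<in>E. ennreal r < c x}"
        using C(2,5) D(2) FE r(2) by (force intro: less_le_trans)
      have "\<tau> C \<le> \<tau> (D \<inter> {x\<in>E. ennreal r < c x})"
        by (rule max_mono2[OF tau C(1) _ sub]) (use D(1) Dt[OF r(1)] in auto)
      then have "m (ennreal r) (\<tau> C) \<le> m (ennreal r) (\<tau> (D \<inter> {x\<in>E. ennreal r < c x}))"
        by (rule pm_mono2[OF pm])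
      also have "\<dots> \<le> idem_integral m E \<tau> c D"
        unfolding idem_integral_def using r(1) by (intro SUP_upper) auto
      also have "\<dots> = \<nu> D" using dens[OF D(1)] by simp
      finally show "m (ennreal r) (\<tau> C) \<le> \<nu> D" .
    qed
    then show False using D(3) unfolding I_def by simp
  qed
  have eq: "\<nu> A = \<nu> (A - F)" if A: "A \<in> B" for A
  proof (rule antisym)
    show "\<nu> (A - F) \<le> \<nu> A" using max_mono2[OF nu _ A] A FB by auto
    show "\<nu> A \<le> \<nu> (A - F)"
      unfolding semi[OF A]
    proof (rule SUP_least)
      fix A' assume A': "A' \<in> {A'\<in>B. A' \<subseteq> A \<and> odot_finite m (\<nu> A')}"
      then have A'B: "A' \<in> B" and A'A: "A' \<subseteq> A" and nI: "\<nu> A' \<notin> I" using finI by auto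
      have B1: "A' \<inter> F \<in> B" and B2: "A' - F \<in> B" using A'B FB by auto
      have "\<nu> (A' \<inter> F) \<le> \<nu> A'" using max_mono2[OF nu B1 A'B] by auto
      then have "\<nu> (A' \<inter> F) \<notin> I" using nI Iup by blast
      then have z: "\<nu> (A' \<inter> F) = 0" using claim B1 by auto
      have "\<nu> A' = \<nu> ((A' \<inter> F) \<union> (A' - F))" by (simp add: Int_Diff_Un)
      also have "\<dots> = \<nu> (A' - F)" using max_mono[OF nu B1 B2] z by (simp add: sup.absorb2)
      also have "\<dots> \<le> \<nu> (A - F)" using max_mono2[OF nu B2 _] A'A A FB by blast
      finally show "\<nu> A' \<le> \<nu> (A - F)" .
    qed
  qed
  have "has_density m E B \<nu> \<tau> c'"
    unfolding has_density_def
  proof (intro conjI ballI c'm)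
    fix A assume A: "A \<in> B"
    have AF: "A - F \<in> B" using A FB by auto
    show "\<nu> A = idem_integral m E \<tau> c' A"
      unfolding int_eq eq[OF A] by (rule dens[OF AF])
  qed
  then show ?thesis using fin by blast
qed

end
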